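(* Consider the system $\dot{\boldsymbol{x}}(t)=-L(t)\boldsymbol{x}(t)$, $\boldsymbol{x}(t)\in\mathbb{R}^{dn}$, on a matrix-weighted switching network $\mathcal{G}(t)$ satisfying Assumption 2 (described in the context), with switching set $\{\mathcal{G}_1,\dots,\mathcal{G}_M\}$ and $L(\mathcal{G}_i)$ the matrix-valued Laplacian of $\mathcal{G}_i$. If $\lim_{t\to\infty}\boldsymbol{x}(t)=\boldsymbol{x}^*$, then $$\boldsymbol{x}^*\in\bigcap_{i=1}^{M}\mathrm{null}(L(\mathcal{G}_i)).$$ Moreover, $$\boldsymbol{x}^*=\sum_{i=1}^{r}(\boldsymbol{\eta}_i^\top\boldsymbol{x}(t_0))\boldsymbol{\eta}_i,$$ where $\boldsymbol{\eta}_1,\dots,\boldsymbol{\eta}_r\in\mathbb{R}^{dn}$ is an orthonormal basis of $\bigcap_{i=1}^{M}\mathrm{null}(L(\mathcal{G}_i))$ (i.e. $\mathrm{span}\{\boldsymbol{\eta}_1,\dots,\boldsymbol{\eta}_r\}$ equals this intersection and $\boldsymbol{\eta}_i^\top\boldsymbol{\eta}_j=1$ if $i=j$, $0$ otherwise).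
   Context: A matrix-weighted switching network $\mathcal{G}(t)=(\mathcal{V},\mathcal{E}(t),A(t))$ has node set $\mathcal{V}=\{1,\dots,n\}$, $n>1$; each edge $(i,j)\in\mathcal{E}(t)$ carries a symmetric weight $A_{ij}(t)\in\mathbb{R}^{d\times d}$ which is either positive (semi-)definite or negative (semi-)definite, with $A_{ij}=A_{ji}$, $A_{ii}=0$, and $A_{ij}(t)=0$ if $(i,j)\notin\mathcal{E}(t)$. Set $|A_{ij}|=A_{ij}$ if $A_{ij}\succeq0$ and $-A_{ij}$ if $A_{ij}\preceq0$. With $A=[A_{ij}]\in\mathbb{R}^{dn\times dn}$ and $D=\mathrm{diag}(D_1,\dots,D_n)$, $D_i=\sum_{j:(i,j)\in\mathcal{E}}|A_{ij}|$, the matrix-valued Laplacian is $L=D-A$; the system $\dot{\boldsymbol{x}}=-L(t)\boldsymbol{x}$ is the stacked form of $\dot{\boldsymbol{x}}_i=-\sum_{j}|A_{ij}|(\boldsymbol{x}_i-\mathrm{sgn}(A_{ij})\boldsymbol{x}_j)$, where $\mathrm{sgn}(A)$ is $1$, $-1$, $0$ for nonzero PSD, nonzero NSD, zero $A$ respectively. The initial time is $t_0=0$. Assumption 1: there is a sequence $\{t_k\}_{k\in\mathbb{N}}$ with $t_0=0$, $t_k\to\infty$, $t_{k+1}-t_k\ge\alpha>0$, and $\mathcal{G}(t)$ is constant on each $[t_k,t_{k+1})$. Assumption 2: Assumption 1 holds, and $\mathcal{G}(t)$ is always chosen from a finite set $\{\mathcal{G}_1,\dots,\mathcal{G}_M\}$,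 each $\mathcal{G}_i$ appearing infinitely many times in the sequence. *)

theory Defs
  imports "HOL-Analysis.Analysis"
begin

text \<open>Nodes are indexed by a finite type 'n, the agent-state dimension d by a finite
type 'd.  A stacked state x in R^(dn) is a vector indexed by 'n \<times> 'd, component (i,a)
being the a-th coordinate of agent i.\<close>

definition psd :: "real^'d^'d \<Rightarrow> bool" where
  "psd A \<longleftrightarrow> (\<forall>v. 0 \<le> v \<bullet> (A *v v))"

definition nsd :: "real^'d^'d \<Rightarrow> bool" where
  "nsd A \<longleftrightarrow> (\<forall>v. v \<bullet> (A *v v) \<le> 0)"

definition mabs :: "real^'d^'d \<Rightarrow> real^'d^'d" where
  "mabs A = (if psd A then A else - A)"

text \<open>A matrix-weighted graph on node type 'n, given by its weight function W i j = A_ij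
(zero iff (i,j) is not an edge).\<close>
definition mw_graph :: "('n::finite \<Rightarrow> 'n \<Rightarrow> real^'d^'d) \<Rightarrow> bool" where
  "mw_graph W \<longleftrightarrow>
     (\<forall>i j. transpose (W i j) = W i j) \<and>
     (\<forall>i j. W i j = W j i) \<and>
     (\<forall>i. W i i = 0) \<and>
     (\<forall>i j. psd (W i j) \<or> nsd (W i j))"

text \<open>Matrix-valued Laplacian L = D - A, D = diag(D_1,...,D_n), D_i = sum_j |A_ij|.\<close>
definition deg_block :: "('n::finite \<Rightarrow> 'n \<Rightarrow> real^'d^'d) \<Rightarrow> 'n \<Rightarrow> real^'d^'d" where
  "deg_block W i = (\<Sum>j\<in>UNIV. mabs (W i j))"

definition laplacian ::
  "('n::finite \<Rightarrow> 'n \<Rightarrow> real^'d::finite^'d) \<Rightarrow> real^('n \<times> 'd)^('n \<times> 'd)" where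
  "laplacian W = (\<chi> p q. (if fst p = fst q then deg_block W (fst p) $ snd p $ snd q else 0) - W (fst p) (fst q) $ snd p $ snd q)"

definition null_space :: "real^'m^'k \<Rightarrow> (real^'m) set" where
  "null_space L = {v. L *v v = 0}"

end

theory Submission
  imports Defs
begin

lemma laplacian_sym:
  assumes "mw_graph W"
  shows "transpose (laplacian W) = laplacian W"
proof -
  have T: "W i j $ a $ b = W i j $ b $ a" for i j a b
  proof -
    have "transpose (W i j) = W i j" using assms unfolding mw_graph_def by auto
    then have "transpose (W i j) $ a $ b = W i j $ a $ b" by simp
    then show ?thesis by (simp add: transpose_def)
  qed
  have S: "W i j = W j i" for i j using assms unfolding mw_graph_def by auto
  have M: "mabs (W i j) $ a $ b = mabs (W i j) $ b $ a" for i j a b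
    by (simp add: mabs_def T)
  have D: "deg_block W i $ a $ b = deg_block W i $ b $ a" for i a b
    unfolding deg_block_def by (simp add: M)
  show ?thesis
    unfolding laplacian_def transpose_def
    by (simp add: vec_eq_iff D T S)
qed

lemma orth_expand:
  fixes eta :: "nat \<Rightarrow> 'a::real_inner"
  assumes orth: "\<forall>i<r. \<forall>j<r. eta i \<bullet> eta j = (if i = j then 1 else 0)"
    and y: "y \<in> span (eta ` {..<r})"
  shows "y = (\<Sum>i<r. (eta i \<bullet> y) *\<^sub>R eta i)"
proof -
  have inj: "inj_on eta {..<r}"
  proof (rule inj_onI, rule ccontr)
    fix a b assume ab: "a \<in> {..<r}" "b \<in> {..<r}" "eta a = eta b" "a \<noteq> b"
    have "eta a \<bullet> eta b = 0" using orth ab(1,2,4) by auto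
    moreover have "eta a \<bullet> eta a = 1" using orth ab(1) by auto
    ultimately show False using ab by simp
  qed
  obtain u where u: "y = (\<Sum>v\<in>eta ` {..<r}. u v *\<^sub>R v)"
    using y span_finite[of "eta ` {..<r}"] by auto
  have y2: "y = (\<Sum>i<r. u (eta i) *\<^sub>R eta i)"
    using u by (simp add: sum.reindex[OF inj])
  have c: "eta j \<bullet> y = u (eta j)" if "j < r" for j
  proof -
    have "eta j \<bullet> y = (\<Sum>i<r. u (eta i) * (eta j \<bullet> eta i))"
      by (simp add: y2 inner_sum_right)
    also have "\<dots> = (\<Sum>i<r. if i = j then u (eta i) else 0)"
      by (rule sum.cong) (use orth that in auto)
    also have "\<dots> = u (eta j)" using that by simp
    finally show ?thesis .
  qed
  show ?thesis
    by (subst y2) (rule sum.cong, auto simp: c)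
qed

lemma deriv_inner:
  assumes "(x has_vector_derivative D) (at s)"
  shows "((\<lambda>t. w \<bullet> x t) has_real_derivative (w \<bullet> D)) (at s)"
proof -
  have "((\<lambda>t. w \<bullet> x t) has_derivative (\<lambda>h. w \<bullet> (h *\<^sub>R D))) (at s)"
    using has_derivative_inner_right[OF assms[unfolded has_vector_derivative_def], of w] .
  moreover have "(\<lambda>h. w \<bullet> (h *\<^sub>R D)) = (*) (w \<bullet> D)"
    by (rule ext) simp
  ultimately show ?thesis by (simp add: has_field_derivative_def)
qed

theorem theorem5:
  fixes Gs :: "nat \<Rightarrow> ('n::finite \<Rightarrow> 'n \<Rightarrow> real^'d::finite^'d)"
    and M :: nat
    and sigma :: "real \<Rightarrow> nat"
    and tk :: "nat \<Rightarrow> real"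
    and alpha :: real
    and x :: "real \<Rightarrow> real^('n \<times> 'd)"
    and xstar :: "real^('n \<times> 'd)"
  assumes n_gt1: "CARD('n) > 1"
    and graphs: "\<forall>i<M. mw_graph (Gs i)"
    and M_pos: "M \<ge> 1"
    and sigma_range: "\<forall>t\<ge>0. sigma t < M"
    and t0: "tk 0 = 0"
    and alpha_pos: "alpha > 0"
    and dwell: "\<forall>k. tk (Suc k) - tk k \<ge> alpha"
    and tk_lim: "filterlim tk at_top sequentially"
    and piecewise_const: "\<forall>k. \<forall>t. tk k \<le> t \<and> t < tk (Suc k) \<longrightarrow> sigma t = sigma (tk k)"
    and inf_often: "\<forall>i<M. infinite {k. sigma (tk k) = i}"
    and x_cont: "continuous_on {0..} x"
    and x_ode: "\<forall>t>0. t \<notin> range tk \<longrightarrow>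
               (x has_vector_derivative (- (laplacian (Gs (sigma t)) *v x t))) (at t)"
    and x_lim: "(x \<longlongrightarrow> xstar) at_top"
  shows "xstar \<in> (\<Inter>i<M. null_space (laplacian (Gs i)))
     \<and> (\<forall>(r::nat) (eta :: nat \<Rightarrow> real^('n \<times> 'd)).
           (\<forall>i<r. \<forall>j<r. eta i \<bullet> eta j = (if i = j then 1 else 0)) \<and>
           span (eta ` {..<r}) = (\<Inter>i<M. null_space (laplacian (Gs i)))
           \<longrightarrow> xstar = (\<Sum>i<r. (eta i \<bullet> x 0) *\<^sub>R eta i))"
proof -
  have smono: "strict_mono tk"
    unfolding strict_mono_Suc_iff using dwell alpha_pos by (smt (verit))
  have tk_nonneg: "tk k \<ge> 0" for k
    using strict_mono_less_eq[OF smono, of 0 k] t0 by simp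
  have gap: "s \<notin> range tk" if "tk k < s" "s < tk (Suc k)" for k s
  proof
    assume "s \<in> range tk"
    then obtain m where m: "s = tk m" by auto
    have "k < m" using that m strict_mono_less[OF smono] by auto
    moreover have "m < Suc k" using that m strict_mono_less[OF smono] by auto
    ultimately show False by simp
  qed
  have ev_big: "\<exists>N. \<forall>k\<ge>N. tk k \<ge> Z" for Z
    using tk_lim unfolding filterlim_at_top eventually_sequentially by auto
  have fin: "finite {k. tk k \<le> T}" for T
  proof -
    obtain N where N: "\<forall>k\<ge>N. tk k \<ge> T + 1" using ev_big by blast
    have "{k. tk k \<le> T} \<subseteq> {..<N}" using N by (force simp: not_less[symmetric])
    then show ?thesis using finite_subset by blast
  qed
  have xder: "((\<lambda>t. w \<bullet> x t) has_real_derivative (- (w \<bullet> (laplacian (Gs (sigma s)) *v x s)))) (at s)"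
    if "s > 0" "s \<notin> range tk" for w s
    using deriv_inner[OF x_ode[rule_format, OF that]] by simp
  have part1: "laplacian (Gs i) *v xstar = 0" if iM: "i < M" for i
  proof (rule ccontr)
    define L where "L = laplacian (Gs i)"
    define v where "v = L *v xstar"
    assume "laplacian (Gs i) *v xstar \<noteq> 0"
    then have "v \<noteq> 0" by (simp add: v_def L_def)
    define c where "c = v \<bullet> v"
    have cpos: "c > 0" using \<open>v \<noteq> 0\<close> by (simp add: c_def)
    have hrw: "v \<bullet> (L *v y) = (v v* L) \<bullet> y" for y by (simp add: dot_lmul_matrix)
    have "((\<lambda>t. (v v* L) \<bullet> x t) \<longlongrightarrow> (v v* L) \<bullet> xstar) at_top"
      by (intro tendsto_intros x_lim)
    moreover have "(v v* L) \<bullet> xstar = c" by (simp add: c_def v_def dot_lmul_matrix)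
    ultimately have "((\<lambda>t. v \<bullet> (L *v x t)) \<longlongrightarrow> c) at_top" by (simp add: hrw)
    then have e1: "eventually (\<lambda>t. v \<bullet> (L *v x t) > c/2) at_top"
      using cpos by (intro order_tendstoD) auto
    have "((\<lambda>t. v \<bullet> x t) \<longlongrightarrow> v \<bullet> xstar) at_top"
      by (intro tendsto_intros x_lim)
    then have e2: "eventually (\<lambda>t. dist (v \<bullet> x t) (v \<bullet> xstar) < alpha * c / 8) at_top"
      using cpos alpha_pos by (intro tendstoD) auto
    obtain T where T: "\<And>t. t \<ge> T \<Longrightarrow> v \<bullet> (L *v x t) > c/2 \<and> dist (v \<bullet> x t) (v \<bullet> xstar) < alpha * c / 8"
      using eventually_conj[OF e1 e2] unfolding eventually_at_top_linorder by blast
    obtain N where N: "\<forall>k\<ge>N. tk k \<ge> T" using ev_big by blast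
    obtain k where k: "k \<ge> N" "sigma (tk k) = i"
      using inf_often iM unfolding infinite_nat_iff_unbounded_le by blast
    define a where "a = tk k"
    define b where "b = a + alpha"
    have ab: "a < b" using alpha_pos by (simp add: b_def)
    have btk: "b \<le> tk (Suc k)" using dwell by (simp add: a_def b_def) (smt (verit))
    have aT: "a \<ge> T" using N k by (simp add: a_def)
    have inner_props: "s > 0 \<and> s \<notin> range tk \<and> sigma s = i" if "a < s" "s < b" for s
      using that btk gap[of k s] tk_nonneg[of k] piecewise_const k(2)
      unfolding a_def by auto
    have contf: "continuous_on {a..b} (\<lambda>t. v \<bullet> x t)"
      apply (intro continuous_intros)
      using continuous_on_subset[OF x_cont, of "{a..b}"] tk_nonneg[of k] by (auto simp: a_def)
    obtain l z where lz: "a < z" "z < b" "DERIV (\<lambda>t. v \<bullet> x t) z :> l"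
        "v \<bullet> x b - v \<bullet> x a = (b - a) * l"
      using MVT[OF ab contf] inner_props xder
      by (metis real_differentiable_def)
    have "DERIV (\<lambda>t. v \<bullet> x t) z :> - (v \<bullet> (L *v x z))"
      using xder[of z v] inner_props[OF lz(1,2)] by (simp add: L_def)
    then have l: "l = - (v \<bullet> (L *v x z))" using lz(3) DERIV_unique by blast
    have "v \<bullet> (L *v x z) > c/2" using T lz(1) aT by auto
    then have "v \<bullet> x b - v \<bullet> x a < - alpha * c / 2"
      using lz(4) l alpha_pos by (simp add: b_def)
    moreover have "dist (v \<bullet> x b) (v \<bullet> xstar) < alpha * c / 8"
      "dist (v \<bullet> x a) (v \<bullet> xstar) < alpha * c / 8"
      using T aT ab by auto
    ultimately show False unfolding dist_real_def by linarith
  qed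
  have xN: "xstar \<in> (\<Inter>i<M. null_space (laplacian (Gs i)))"
    using part1 by (simp add: null_space_def)
  have part2: "xstar = (\<Sum>i<r. (eta i \<bullet> x 0) *\<^sub>R eta i)"
    if orth: "\<forall>i<r. \<forall>j<r. eta i \<bullet> eta j = (if i = j then 1 else 0)"
      and sp: "span (eta ` {..<r}) = (\<Inter>i<M. null_space (laplacian (Gs i)))"
    for r and eta :: "nat \<Rightarrow> real^('n \<times> 'd)"
  proof -
    have const: "eta j \<bullet> xstar = eta j \<bullet> x 0" if jr: "j < r" for j
    proof -
      define e where "e = eta j"
      have eN: "laplacian (Gs m) *v e = 0" if "m < M" for m
      proof -
        have "e \<in> span (eta ` {..<r})" using jr by (simp add: e_def span_base)
        then show ?thesis using sp that by (auto simp: null_space_def)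
      qed
      have zero: "e \<bullet> (laplacian (Gs m) *v y) = 0" if "m < M" for m y
      proof -
        have "e \<bullet> (laplacian (Gs m) *v y) = (e v* laplacian (Gs m)) \<bullet> y"
          by (simp add: dot_lmul_matrix)
        also have "e v* laplacian (Gs m) = transpose (laplacian (Gs m)) *v e"
          by simp
        also have "\<dots> = 0" using laplacian_sym[of "Gs m"] graphs that eN by simp
        finally show ?thesis by simp
      qed
      have cst: "e \<bullet> x t = e \<bullet> x 0" if t: "t \<ge> 0" for t
      proof -
        have F: "finite (insert 0 (tk ` {k. tk k \<le> t}))" using fin by simp
        have C: "continuous_on {0..t} (\<lambda>t. e \<bullet> x t)"
          apply (intro continuous_intros)
          using continuous_on_subset[OF x_cont, of "{0..t}"] by auto
        have D: "((\<lambda>t. e \<bullet> x t) has_derivative (\<lambda>h. 0)) (at s within {0..t})"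
          if s: "s \<in> {0..t} - insert 0 (tk ` {k. tk k \<le> t})" for s
        proof -
          from s have s0: "s > 0" and sr: "s \<notin> range tk" by auto
          have "sigma s < M" using sigma_range s0 by auto
          then have "((\<lambda>t. e \<bullet> x t) has_real_derivative 0) (at s)"
            using xder[OF s0 sr, of e] zero by simp
          then have "((\<lambda>t. e \<bullet> x t) has_derivative (\<lambda>h. 0)) (at s)"
          proof -
            have "(*) (0::real) = (\<lambda>h. 0)" by (rule ext) simp
            then show ?thesis using \<open>((\<lambda>t. e \<bullet> x t) has_real_derivative 0) (at s)\<close>
              by (simp add: has_field_derivative_def)
          qed
          then show ?thesis by (rule has_derivative_at_withinI)
        qed
        show ?thesis
          using has_derivative_zero_unique_strong_interval[OF F C _ D, of "e \<bullet> x 0" t] t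
          by simp
      qed
      have l1: "((\<lambda>t. e \<bullet> x t) \<longlongrightarrow> e \<bullet> xstar) at_top"
        by (intro tendsto_intros x_lim)
      have "eventually (\<lambda>t. e \<bullet> x 0 = e \<bullet> x t) at_top"
        using cst unfolding eventually_at_top_linorder by metis
      then have l2: "((\<lambda>t. e \<bullet> x t) \<longlongrightarrow> e \<bullet> x 0) at_top"
        by (rule tendsto_eventually[OF eventually_mono]) auto
      show ?thesis using tendsto_unique[OF trivial_limit_at_top_linorder l1 l2]
        by (simp add: e_def)
    qed
    have "xstar = (\<Sum>i<r. (eta i \<bullet> xstar) *\<^sub>R eta i)"
      using orth_expand[OF orth] xN sp by simp
    also have "\<dots> = (\<Sum>i<r. (eta i \<bullet> x 0) *\<^sub>R eta i)"
      by (rule sum.cong) (auto simp: const)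
    finally show ?thesis .
  qed
  show ?thesis using xN part2 by blast
qed

end
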